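(* Let $\mathbf{Z}=\{Z_{\mathbf{u}}\}_{\mathbf{u}\in\mathbb{R}^2}$ be a max-stable random field with unit Fréchet margins $F(z)=\exp(-z^{-1})$, $z>0$, and let $\mathbf{x}=\{\mathbf{x}_1,\ldots,\mathbf{x}_k\}$ and $\mathbf{y}=\{\mathbf{y}_1,\ldots,\mathbf{y}_s\}$ be disjoint sets of locations in $\mathbb{R}^2$. With $M(\mathbf{x})=\bigvee_{i=1}^k Z_{\mathbf{x}_i}$, $M(\mathbf{y})=\bigvee_{j=1}^s Z_{\mathbf{y}_j}$ and $$\nu^{\alpha,\beta}(\mathbf{x},\mathbf{y})=\tfrac12 E\left|F^{\alpha}(M(\mathbf{x}))-F^{\beta}(M(\mathbf{y}))\right|,\qquad \alpha,\beta>0,$$ we have, for all $\alpha,\beta>0$: 1. $0\le \nu^{\alpha,\beta}(\mathbf{x},\mathbf{y})\le \tfrac12$; 2. $\displaystyle \nu^{\alpha,\alpha}(\mathbf{x},\mathbf{y})=\frac{\epsilon_{\mathbf{x}\cup\mathbf{y}}}{\alpha+\epsilon_{\mathbf{x}\cup\mathbf{y}}}-\frac12\left(\frac{\epsilon_{\mathbf{x}}}{\alpha+\epsilon_{\mathbf{x}}}+\frac{\epsilon_{\mathbf{y}}}{\alpha+\epsilon_{\mathbf{y}}}\right)$, where $\epsilon_{\mathbf{x}}$, $\epsilon_{\mathbf{y}}$, $\epsilon_{\mathbf{x}\cup\mathbf{y}}$ are the extremal coefficients of the regions $\mathbf{x}$, $\mathbf{y}$, $\mathbf{x}\cup\ma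thbf{y}$.
   Context: For a finite set of locations $\mathbf{w}=\{\mathbf{w}_1,\ldots,\mathbf{w}_m\}$, the dependence function is $V_{\mathbf{w}}(z_1,\ldots,z_m)=-\ln P(Z_{\mathbf{w}_1}\le z_1,\ldots,Z_{\mathbf{w}_m}\le z_m)$, $z_i>0$, and the extremal coefficient is $\epsilon_{\mathbf{w}}=V_{\mathbf{w}}(1,\ldots,1)$. In particular $\epsilon_{\mathbf{x}\cup\mathbf{y}}=V_{\mathbf{x},\mathbf{y}}(1,\ldots,1)$, the dependence function of the joint vector $(Z_{\mathbf{x}_1},\ldots,Z_{\mathbf{x}_k},Z_{\mathbf{y}_1},\ldots,Z_{\mathbf{y}_s})$ evaluated at all ones. *)

theory Defs
  imports "HOL-Probability.Probability"
begin

definition frechet_cdf :: "real \<Rightarrow> real" where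
  "frechet_cdf z = (if z > 0 then exp (- 1 / z) else 0)"

definition joint_cdf :: "'a measure \<Rightarrow> ('l \<Rightarrow> 'a \<Rightarrow> real) \<Rightarrow> 'l set \<Rightarrow> ('l \<Rightarrow> real) \<Rightarrow> real" where
  "joint_cdf M Z w z = measure M {\<omega> \<in> space M. \<forall>u\<in>w. Z u \<omega> \<le> z u}"

text \<open>Max-stable random field: all finite-dimensional distributions G_w satisfy
  G_w(a_n z + b_n)^n = G_w(z) for normalising functions a_n > 0, b_n, i.e. the
  normalised maximum of n iid copies has the same finite-dimensional laws.\<close>
definition max_stable :: "'a measure \<Rightarrow> ('l \<Rightarrow> 'a \<Rightarrow> real) \<Rightarrow> bool" where
  "max_stable M Z \<longleftrightarrow> (\<forall>u. Z u \<in> borel_measurable M) \<and>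
     (\<exists>a b :: nat \<Rightarrow> 'l \<Rightarrow> real. \<forall>n\<ge>1. (\<forall>u. a n u > 0) \<and>
        (\<forall>w z. finite w \<longrightarrow>
           joint_cdf M Z w (\<lambda>u. a n u * z u + b n u) ^ n = joint_cdf M Z w z))"

definition dependence_fun :: "'a measure \<Rightarrow> ('l \<Rightarrow> 'a \<Rightarrow> real) \<Rightarrow> 'l set \<Rightarrow> ('l \<Rightarrow> real) \<Rightarrow> real" where
  "dependence_fun M Z w z = - ln (joint_cdf M Z w z)"

definition extremal_coeff :: "'a measure \<Rightarrow> ('l \<Rightarrow> 'a \<Rightarrow> real) \<Rightarrow> 'l set \<Rightarrow> real" where
  "extremal_coeff M Z w = dependence_fun M Z w (\<lambda>_. 1)"

definition region_max :: "('l \<Rightarrow> 'a \<Rightarrow> real) \<Rightarrow> 'l set \<Rightarrow> 'a \<Rightarrow> real" where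
  "region_max Z w \<omega> = Max ((\<lambda>u. Z u \<omega>) ` w)"

definition madogram_nu :: "'a measure \<Rightarrow> ('l \<Rightarrow> 'a \<Rightarrow> real) \<Rightarrow> real \<Rightarrow> real \<Rightarrow> 'l set \<Rightarrow> 'l set \<Rightarrow> real" where
  "madogram_nu M Z \<alpha> \<beta> x y = 1/2 * (\<integral>\<omega>. \<bar>frechet_cdf (region_max Z x \<omega>) powr \<alpha>
                                         - frechet_cdf (region_max Z y \<omega>) powr \<beta>\<bar> \<partial>M)"

end

theory Submission
  imports Defs
begin



lemma layer_cake:
  fixes V :: "'a \<Rightarrow> real"
  assumes P: "prob_space M" and Vm[measurable]: "V \<in> borel_measurable M"
  and V01: "\<And>\<omega>. \<omega> \<in> space M \<Longrightarrow> 0 \<le> V \<omega> \<and> V \<omega> \<le> 1"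
  and h: "\<And>s. 0 < s \<Longrightarrow> s < 1 \<Longrightarrow> measure M {\<omega>\<in>space M. s < V \<omega>} = h s"
  and hnn: "\<And>s. s \<in> {0..1} \<Longrightarrow> 0 \<le> h s"
  and hI: "(h has_integral I) {0..1}"
  shows "integral\<^sup>L M V = I"
proof -
  interpret prob_space M by (rule P)
  interpret pair_sigma_finite M lborel
    by (simp add: pair_sigma_finite.intro lborel.sigma_finite_measure_axioms sigma_finite_measure_axioms)
  have int: "integrable M V"
    by (rule integrable_const_bound[where B=1]) (use V01 in auto)
  have I0: "0 \<le> I" using hI hnn by (metis has_integral_nonneg)
  have "ennreal (integral\<^sup>L M V) = (\<integral>\<^sup>+\<omega>. ennreal (V \<omega>) \<partial>M)"
    using int V01 by (subst nn_integral_eq_integral) (auto intro!: AE_I2)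
  also have "\<dots> = (\<integral>\<^sup>+\<omega>. (\<integral>\<^sup>+s. ennreal (if 0 \<le> s \<and> s < V \<omega> then 1 else 0) \<partial>lborel) \<partial>M)"
  proof (rule nn_integral_cong)
    fix \<omega> assume "\<omega> \<in> space M"
    then have "0 \<le> V \<omega>" using V01 by auto
    have "(\<integral>\<^sup>+s. ennreal (if 0 \<le> s \<and> s < V \<omega> then 1 else 0) \<partial>lborel) = (\<integral>\<^sup>+s. indicator {0..<V \<omega>} s \<partial>lborel)"
      by (rule nn_integral_cong) (auto simp: indicator_def)
    also have "\<dots> = ennreal (V \<omega>)" using \<open>0 \<le> V \<omega>\<close> by simp
    finally show "ennreal (V \<omega>) = (\<integral>\<^sup>+s. ennreal (if 0 \<le> s \<and> s < V \<omega> then 1 else 0) \<partial>lborel)" by simp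
  qed
  also have "\<dots> = (\<integral>\<^sup>+s. (\<integral>\<^sup>+\<omega>. ennreal (if 0 \<le> s \<and> s < V \<omega> then 1 else 0) \<partial>M) \<partial>lborel)"
    by (rule Fubini'[symmetric]) measurable
  also have "\<dots> = (\<integral>\<^sup>+s. ennreal (h s) * indicator {0..1} s \<partial>lborel)"
  proof (rule nn_integral_cong_AE)
    have "AE s in lborel. s \<noteq> 0" "AE s in lborel. s \<noteq> (1::real)"
      by (rule AE_lborel_singleton)+
    then show "AE s in lborel. (\<integral>\<^sup>+\<omega>. ennreal (if 0 \<le> s \<and> s < V \<omega> then 1 else 0) \<partial>M) = ennreal (h s) * indicator {0..1} s"
    proof eventually_elim
      case (elim s)
      have "(\<integral>\<^sup>+\<omega>. ennreal (if 0 \<le> s \<and> s < V \<omega> then 1 else 0) \<partial>M) = (\<integral>\<^sup>+\<omega>. indicator {\<omega>\<in>space M. 0 \<le> s \<and> s < V \<omega>} \<omega> \<partial>M)"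
        by (rule nn_integral_cong) (auto simp: indicator_def)
      also have "\<dots> = emeasure M {\<omega>\<in>space M. 0 \<le> s \<and> s < V \<omega>}"
        by (rule nn_integral_indicator) measurable
      finally have eq: "(\<integral>\<^sup>+\<omega>. ennreal (if 0 \<le> s \<and> s < V \<omega> then 1 else 0) \<partial>M) = emeasure M {\<omega>\<in>space M. 0 \<le> s \<and> s < V \<omega>}" .
      show ?case
      proof (cases "0 < s \<and> s < 1")
        case True
        then have "{\<omega>\<in>space M. 0 \<le> s \<and> s < V \<omega>} = {\<omega>\<in>space M. s < V \<omega>}" by auto
        then show ?thesis using eq True h[of s] by (simp add: emeasure_eq_measure indicator_def)
      next
        case False
        then have e0: "{\<omega>\<in>space M. 0 \<le> s \<and> s < V \<omega>} = {}" using elim V01 by fastforce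
        have "s \<notin> {0..1}" using False elim by auto
        then show ?thesis unfolding eq e0 by simp
      qed
    qed
  qed
  also have "\<dots> = ennreal I"
    by (rule nn_integral_has_integral_lebesgue'[OF hnn hI])
  finally show ?thesis using I0 integral_nonneg_AE[of V M] V01
    by (simp add: AE_I2)
qed



lemma frechet_pow:
  assumes n: "n \<ge> (1::nat)" and eq: "frechet_cdf y ^ n = frechet_cdf z" and z: "z > 0"
  shows "y = real n * z"
proof -
  have fz: "frechet_cdf z = exp (-1/z)" using z by (simp add: frechet_cdf_def)
  have y: "y > 0"
  proof (rule ccontr)
    assume "\<not> y > 0"
    then have "frechet_cdf y ^ n = 0" using n by (simp add: frechet_cdf_def)
    then show False using eq fz by simp
  qed
  have e1: "exp (-1/y) ^ n = exp (-1/z)" using eq fz y by (simp add: frechet_cdf_def)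
  have "exp (real n * (-1/y)) = exp (-1/z)" using e1 by (simp only: exp_of_nat_mult)
  then have "real n * (-1/y) = -1/z" by (simp only: exp_inj_iff)
  then show ?thesis using y z by (simp add: field_simps)
qed

lemma marg_all:
  assumes P: "prob_space M" and m: "Z u \<in> borel_measurable M"
    and marg: "\<And>z. z > 0 \<Longrightarrow> measure M {\<omega> \<in> space M. Z u \<omega> \<le> z} = frechet_cdf z"
  shows "measure M {\<omega> \<in> space M. Z u \<omega> \<le> z} = frechet_cdf z"
proof (cases "z > 0")
  case True then show ?thesis using marg by simp
next
  case False
  interpret prob_space M by (rule P)
  define p where "p = measure M {\<omega> \<in> space M. Z u \<omega> \<le> z}"
  have le: "p \<le> exp (-1/d)" if "d > 0" for d
  proof -
    have "p \<le> measure M {\<omega> \<in> space M. Z u \<omega> \<le> d}"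
      unfolding p_def using False that m by (intro finite_measure_mono) (auto, measurable)
    also have "\<dots> = exp (-1/d)" using marg[OF that] that by (simp add: frechet_cdf_def)
    finally show ?thesis .
  qed
  have p0: "p \<ge> 0" "p \<le> 1" unfolding p_def by auto
  have "p = 0"
  proof (rule ccontr)
    assume "p \<noteq> 0"
    then have pp: "p > 0" using p0 by simp
    show False
    proof (cases "p = 1")
      case True then show False using le[of 1] by simp
    next
      case False
      then have "p < 1" using p0 by simp
      then have lnp: "ln p < 0" using pp by simp
      define d where "d = -1/(2 * ln p)"
      have d: "d > 0" using lnp by (simp add: d_def divide_neg_neg)
      have "-1/d = 2 * ln p" using lnp by (simp add: d_def)
      then have "-1/d = ln p + ln p" by simp
      then have "exp (-1/d) = exp (ln p) * exp (ln p)" by (simp only: exp_add)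
      then have "exp (-1/d) = p * p" using pp by simp
      then have "p \<le> p * p" using le[OF d] by simp
      then show False using pp \<open>p < 1\<close> by (simp add: mult_le_cancel_left1) 
    qed
  qed
  then show ?thesis using False by (simp add: p_def frechet_cdf_def)
qed

lemma scale:
  assumes P: "prob_space M" and ms: "max_stable M Z"
    and marg: "\<And>u z. z > 0 \<Longrightarrow> measure M {\<omega> \<in> space M. Z u \<omega> \<le> z} = frechet_cdf z"
    and n: "n \<ge> 1" and w: "finite w"
  shows "joint_cdf M Z w (\<lambda>_. real n * t) ^ n = joint_cdf M Z w (\<lambda>_. t)"
proof -
  have meas: "\<And>u. Z u \<in> borel_measurable M" using ms by (simp add: max_stable_def)
  obtain a b :: "nat \<Rightarrow> 'b \<Rightarrow> real" where ab: "\<And>n. n \<ge> 1 \<Longrightarrow> (\<forall>u. a n u > 0) \<and>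
        (\<forall>w z. finite w \<longrightarrow>
           joint_cdf M Z w (\<lambda>u. a n u * z u + b n u) ^ n = joint_cdf M Z w z)"
    using ms unfolding max_stable_def by blast
  note H = conjunct2[OF ab[OF n], rule_format]
  have key: "frechet_cdf (a n u * z + b n u) ^ n = frechet_cdf z" for u z
  proof -
    have "joint_cdf M Z {u} (\<lambda>v. a n v * (\<lambda>_. z) v + b n v) ^ n = joint_cdf M Z {u} (\<lambda>_. z)"
      using H[of "{u}" "\<lambda>_. z"] by simp
    then show ?thesis using marg_all[where Z=Z and u=u, OF P meas marg] by (simp add: joint_cdf_def)
  qed
  have abu: "a n u = real n \<and> b n u = 0" for u
  proof -
    have "a n u * 1 + b n u = real n * 1" using frechet_pow[OF n key[of u 1]] by simp
    moreover have "a n u * 2 + b n u = real n * 2" using frechet_pow[OF n key[of u 2]] by simp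
    ultimately show ?thesis by simp
  qed
  have "joint_cdf M Z w (\<lambda>u. a n u * (\<lambda>_. t) u + b n u) ^ n = joint_cdf M Z w (\<lambda>_. t)"
    using H[of w "\<lambda>_. t", OF w] .
  then show ?thesis using abu by simp
qed



lemma pos_rat_rep:
  assumes "r \<in> \<rat>" "r > 0"
  obtains m n :: nat where "m \<ge> 1" "n \<ge> 1" "r = real m / real n"
proof -
  obtain m n :: nat where "n \<noteq> 0" "\<bar>r\<bar> = real m / real n"
    using Rats_abs_nat_div_natE[OF assms(1)] by metis
  moreover have "m \<noteq> 0" using calculation assms(2) by (cases "m = 0") auto
  ultimately have "m \<ge> 1" "n \<ge> 1" "r = real m / real n" using assms(2) by auto
  then show ?thesis by (rule that)
qed

lemma squeeze:
  fixes g :: "real \<Rightarrow> real"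
  assumes mono: "\<And>s t. s \<le> t \<Longrightarrow> g s \<le> g t"
    and rat: "\<And>m n. m \<ge> (1::nat) \<Longrightarrow> n \<ge> (1::nat) \<Longrightarrow> g (real m / real n) = exp (- e / (real m / real n))"
    and t: "t > 0"
  shows "g t = exp (- e / t)"
proof -
  define \<phi> where "\<phi> = (\<lambda>r::real. exp (- e / r))"
  have grat: "g r = \<phi> r" if "r \<in> \<rat>" "r > 0" for r
    using pos_rat_rep[OF that] rat unfolding \<phi>_def by metis
  have cont: "isCont \<phi> t" unfolding \<phi>_def using t by (intro continuous_intros) auto
  have epsd: "\<exists>d>0. \<forall>r. dist r t < d \<longrightarrow> dist (\<phi> r) (\<phi> t) < x" if "x > 0" for x
    using cont that unfolding continuous_at_eps_delta by blast
  have up: "g t \<le> \<phi> t"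
  proof (rule ccontr)
    assume "\<not> g t \<le> \<phi> t"
    then have x: "g t - \<phi> t > 0" by simp
    obtain d where d: "d > 0" "\<And>r. dist r t < d \<Longrightarrow> dist (\<phi> r) (\<phi> t) < g t - \<phi> t"
      using epsd[OF x] by blast
    obtain r where r: "r \<in> \<rat>" "t < r" "r < t + d" using Rats_dense_in_real[of t "t+d"] d by auto
    have "dist r t < d" using r by (simp add: dist_real_def)
    then have "\<phi> r < g t" using d(2)[of r] by (simp add: dist_real_def abs_less_iff)
    moreover have "g t \<le> g r" using mono r by simp
    moreover have "g r = \<phi> r" using grat r t by simp
    ultimately show False by simp
  qed
  have lo: "\<phi> t \<le> g t"
  proof (rule ccontr)
    assume "\<not> \<phi> t \<le> g t"
    then have x: "\<phi> t - g t > 0" by simp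
    obtain d where d: "d > 0" "\<And>r. dist r t < d \<Longrightarrow> dist (\<phi> r) (\<phi> t) < \<phi> t - g t"
      using epsd[OF x] by blast
    obtain r where r: "r \<in> \<rat>" "max (t - d) (t/2) < r" "r < t"
      using Rats_dense_in_real[of "max (t - d) (t/2)" t] d t by auto
    have "dist r t < d" using r by (simp add: dist_real_def)
    then have "\<phi> r > g t" using d(2)[of r] by (simp add: dist_real_def abs_less_iff)
    moreover have "g r \<le> g t" using mono r by simp
    moreover have "g r = \<phi> r" using grat r t by simp
    ultimately show False by simp
  qed
  show ?thesis using up lo unfolding \<phi>_def by simp
qed

lemma jc_mono:
  assumes P: "prob_space M" and meas: "\<And>u. Z u \<in> borel_measurable M" and w: "finite w" and st: "s \<le> t"
  shows "joint_cdf M Z w (\<lambda>_. s) \<le> joint_cdf M Z w (\<lambda>_. t)"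
proof -
  interpret prob_space M by (rule P)
  show ?thesis unfolding joint_cdf_def using st w meas
    by (intro finite_measure_mono) (auto, measurable)
qed

lemma homog:
  assumes P: "prob_space M" and ms: "max_stable M Z"
    and marg: "\<And>u z. z > 0 \<Longrightarrow> measure M {\<omega> \<in> space M. Z u \<omega> \<le> z} = frechet_cdf z"
    and w: "finite w" "w \<noteq> {}"
  shows "extremal_coeff M Z w > 0"
    and "\<And>t. t > 0 \<Longrightarrow> joint_cdf M Z w (\<lambda>_. t) = exp (- extremal_coeff M Z w / t)"
proof -
  interpret prob_space M by (rule P)
  have meas[measurable]: "\<And>u. Z u \<in> borel_measurable M" using ms by (simp add: max_stable_def)
  define g where "g = (\<lambda>t. joint_cdf M Z w (\<lambda>_. t))"
  have gmono: "g s \<le> g t" if "s \<le> t" for s t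
    unfolding g_def by (rule jc_mono[OF P meas w(1) that])
  have gsc: "g (real n * t) ^ n = g t" if "n \<ge> 1" for n t
    unfolding g_def by (rule scale[OF P ms marg that w(1)])
  have gnn: "g t \<ge> 0" for t unfolding g_def joint_cdf_def by simp
  obtain u0 where u0: "u0 \<in> w" using w by auto
  have c1: "g 1 \<le> exp (-1)"
  proof -
    have "g 1 \<le> measure M {\<omega> \<in> space M. Z u0 \<omega> \<le> 1}"
      unfolding g_def joint_cdf_def using u0 w by (intro finite_measure_mono) (auto, measurable)
    also have "\<dots> = exp (-1)" using marg[of 1 u0] by (simp add: frechet_cdf_def)
    finally show ?thesis .
  qed
  define N where "N = card w + 1"
  have N: "N \<ge> 1" unfolding N_def by simp
  have gN: "g (real N) > 0"
  proof -
    define A where "A = {\<omega> \<in> space M. \<forall>u\<in>w. Z u \<omega> \<le> real N}"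
    have A[measurable]: "A \<in> events" unfolding A_def using w by measurable
    have "space M - A = (\<Union>u\<in>w. {\<omega> \<in> space M. real N < Z u \<omega>})"
      unfolding A_def by auto
    then have "measure M (space M - A) \<le> (\<Sum>u\<in>w. measure M {\<omega> \<in> space M. real N < Z u \<omega>})"
      using w by (simp, intro finite_measure_subadditive_finite) auto
    also have "\<dots> \<le> (\<Sum>u\<in>w. 1 / real N)"
    proof (rule sum_mono)
      fix u assume "u \<in> w"
      have "{\<omega> \<in> space M. real N < Z u \<omega>} = space M - {\<omega> \<in> space M. Z u \<omega> \<le> real N}" by auto
      then have "measure M {\<omega> \<in> space M. real N < Z u \<omega>} = 1 - measure M {\<omega> \<in> space M. Z u \<omega> \<le> real N}"
        by (simp add: prob_compl)
      also have "\<dots> = 1 - exp (- 1 / real N)" using marg[of "real N" u] N by (simp add: frechet_cdf_def)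
      also have "\<dots> \<le> 1 / real N" using exp_ge_add_one_self[of "- 1 / real N"] by simp
      finally show "measure M {\<omega> \<in> space M. real N < Z u \<omega>} \<le> 1 / real N" .
    qed
    also have "\<dots> = real (card w) / real N" by simp
    also have "\<dots> < 1" unfolding N_def by simp
    finally have "measure M (space M - A) < 1" .
    then have "measure M A > 0" using prob_compl[OF A] by simp
    then show ?thesis unfolding g_def joint_cdf_def A_def .
  qed
  have c0: "g 1 > 0" using gsc[OF N, of 1] gN by (metis mult.right_neutral zero_less_power)
  define e where "e = - ln (g 1)"
  have e_eq: "extremal_coeff M Z w = e"
    unfolding e_def extremal_coeff_def dependence_fun_def g_def by simp
  have epos: "e > 0" unfolding e_def using c0 c1
    by (smt (verit) exp_gt_zero ln_less_cancel_iff ln_exp)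
  then show "extremal_coeff M Z w > 0" using e_eq by simp
  have rat: "g (real m / real n) = exp (- e / (real m / real n))" if mn: "m \<ge> 1" "n \<ge> 1" for m n :: nat
  proof -
    have A: "g (real n * (1 / real n)) ^ n = g (1 / real n)" by (rule gsc[OF mn(2)])
    have n1: "real n * (1 / real n) = 1" using mn by simp
    have h1: "g 1 ^ n = g (1 / real n)" using A n1 by metis
    have B: "g (real m * (1 / real n)) ^ m = g (1 / real n)" by (rule gsc[OF mn(1)])
    have mn1: "real m * (1 / real n) = real m / real n" by simp
    have C: "g (real m / real n) ^ m = g 1 ^ n" using B mn1 h1 by metis
    have D: "g 1 ^ n = exp (- e * real n)"
    proof -
      have "exp (- e * real n) = exp (real n * ln (g 1))" unfolding e_def by (simp add: mult.commute)
      also have "\<dots> = exp (ln (g 1)) ^ n" by (rule exp_of_nat_mult)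
      also have "\<dots> = g 1 ^ n" using c0 by simp
      finally show ?thesis by simp
    qed
    have E: "exp (- e * real n) = exp (- e / (real m / real n)) ^ m"
    proof -
      have "real m * (- e / (real m / real n)) = - e * real n" using mn by (simp add: field_simps)
      then have "exp (- e * real n) = exp (real m * (- e / (real m / real n)))" by simp
      also have "\<dots> = exp (- e / (real m / real n)) ^ m" by (rule exp_of_nat_mult)
      finally show ?thesis .
    qed
    have F: "g (real m / real n) ^ m = exp (- e / (real m / real n)) ^ m" using C D E by simp
    show ?thesis by (rule power_eq_imp_eq_base[OF F gnn]) (use mn in auto)
  qed
  fix t :: real assume "t > 0"
  show "joint_cdf M Z w (\<lambda>_. t) = exp (- extremal_coeff M Z w / t)"
    using squeeze[of g e t, OF gmono rat \<open>t > 0\<close>] e_eq unfolding g_def by simp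
qed



lemma frechet_nn: "0 \<le> frechet_cdf z" by (simp add: frechet_cdf_def)
lemma frechet_le1: "frechet_cdf z \<le> 1" by (simp add: frechet_cdf_def)
lemma frechet_mono: assumes "a \<le> b" shows "frechet_cdf a \<le> frechet_cdf b"
proof (cases "a > 0")
  case True
  then have "-1/a \<le> -1/b" using assms by (simp add: frac_le)
  then show ?thesis using True assms by (simp add: frechet_cdf_def)
qed (simp add: frechet_cdf_def)

lemma frechet_meas[measurable]: "frechet_cdf \<in> borel_measurable borel"
  unfolding frechet_cdf_def[abs_def] by measurable

lemma region_max_meas[measurable]:
  assumes "finite w" "\<And>u. Z u \<in> borel_measurable M"
  shows "region_max Z w \<in> borel_measurable M"
  unfolding region_max_def[abs_def] using assms by (intro borel_measurable_Max) auto

lemma region_max_le: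
  assumes "finite w" "w \<noteq> {}"
  shows "region_max Z w \<omega> \<le> c \<longleftrightarrow> (\<forall>u\<in>w. Z u \<omega> \<le> c)"
  unfolding region_max_def using assms by (subst Max_le_iff) auto

lemma V01: assumes "\<gamma> > 0" shows "0 \<le> frechet_cdf m powr \<gamma> \<and> frechet_cdf m powr \<gamma> \<le> 1"
  using frechet_nn[of m] frechet_le1[of m] assms by (auto intro!: powr_le1)

lemma key_equiv:
  assumes s: "0 < s" "s < 1" and g: "\<gamma> > 0"
  shows "s < frechet_cdf m powr \<gamma> \<longleftrightarrow> \<gamma> / (- ln s) < m"
proof -
  have ls: "- ln s > 0" using s by simp
  have cpos: "\<gamma> / (- ln s) > 0" using ls g by (intro divide_pos_pos)
  show ?thesis
  proof (cases "m > 0")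
    case False
    then show ?thesis using s cpos by (simp add: frechet_cdf_def)
  next
    case True
    have "frechet_cdf m powr \<gamma> = exp (- \<gamma> / m)"
      using True by (simp add: frechet_cdf_def powr_def)
    then have "s < frechet_cdf m powr \<gamma> \<longleftrightarrow> ln s < - \<gamma> / m"
      using s by (metis exp_less_cancel_iff exp_ln)
    also have "\<dots> \<longleftrightarrow> \<gamma> / m < - ln s" by auto
    also have "\<dots> \<longleftrightarrow> \<gamma> < (- ln s) * m" using True by (simp add: divide_less_eq mult.commute)
    also have "\<dots> \<longleftrightarrow> \<gamma> / (- ln s) < m" using pos_divide_less_eq[OF ls, of \<gamma> m] by (metis mult.commute)
    finally show ?thesis .
  qed
qed

lemma EV:
  assumes P: "prob_space M" and ms: "max_stable M Z"
    and marg: "\<And>u z. z > 0 \<Longrightarrow> measure M {\<omega> \<in> space M. Z u \<omega> \<le> z} = frechet_cdf z"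
    and w: "finite w" "w \<noteq> {}" and g: "\<gamma> > 0"
  shows "integral\<^sup>L M (\<lambda>\<omega>. frechet_cdf (region_max Z w \<omega>) powr \<gamma>)
           = extremal_coeff M Z w / (\<gamma> + extremal_coeff M Z w)"
proof -
  interpret prob_space M by (rule P)
  have meas[measurable]: "\<And>u. Z u \<in> borel_measurable M" using ms by (simp add: max_stable_def)
  define e where "e = extremal_coeff M Z w"
  have epos: "e > 0" unfolding e_def by (rule homog(1)[OF P ms marg w])
  have G: "\<And>t. t > 0 \<Longrightarrow> joint_cdf M Z w (\<lambda>_. t) = exp (- e / t)"
    unfolding e_def by (rule homog(2)[OF P ms marg w])
  define p where "p = e / \<gamma>"
  have ppos: "p > 0" unfolding p_def using epos g by simp
  have Vm: "(\<lambda>\<omega>. frechet_cdf (region_max Z w \<omega>) powr \<gamma>) \<in> borel_measurable M"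
    using w(1) by measurable
  have c1: "((\<lambda>s::real. 1::real) has_integral 1) {0..1}" using has_integral_const_real[of "1::real" 0 1] by simp
  have c2: "((\<lambda>s. s powr p) has_integral (1/(p+1))) {0..1}" using has_integral_powr_from_0[of p 1] ppos by simp
  have Ieq: "1 - 1/(p+1) = e / (\<gamma> + e)"
  proof -
    have "p + 1 = (e + \<gamma>) / \<gamma>" unfolding p_def using g by (simp add: add_divide_distrib)
    then have "1/(p+1) = \<gamma> / (e + \<gamma>)" by simp
    moreover have "e / (\<gamma> + e) = ((e + \<gamma>) - \<gamma>) / (e + \<gamma>)" by (simp add: add.commute)
    moreover have "((e + \<gamma>) - \<gamma>) / (e + \<gamma>) = (e + \<gamma>) / (e + \<gamma>) - \<gamma> / (e + \<gamma>)"
      by (rule diff_divide_distrib)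
    moreover have "(e + \<gamma>) / (e + \<gamma>) = 1" using g epos by simp
    moreover have "\<gamma> + e = e + \<gamma>" by simp
    ultimately show ?thesis by metis
  qed
  have hI: "((\<lambda>s. 1 - s powr p) has_integral (e / (\<gamma> + e))) {0..1}" using has_integral_diff[OF c1 c2] Ieq by simp
  have h: "measure M {\<omega>\<in>space M. s < frechet_cdf (region_max Z w \<omega>) powr \<gamma>} = 1 - s powr p"
    if s: "0 < s" "s < 1" for s
  proof -
    define c where "c = \<gamma> / (- ln s)"
    have ls: "- ln s > 0" using s by simp
    have cpos: "c > 0" unfolding c_def using ls g by (intro divide_pos_pos)
    define A where "A = {\<omega>\<in>space M. \<forall>u\<in>w. Z u \<omega> \<le> c}"
    have A[measurable]: "A \<in> events" unfolding A_def using w by measurable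
    have eqv: "s < frechet_cdf (region_max Z w \<omega>) powr \<gamma> \<longleftrightarrow> \<not> (\<forall>u\<in>w. Z u \<omega> \<le> c)" for \<omega>
      using key_equiv[OF s g, of "region_max Z w \<omega>"] region_max_le[OF w, of Z \<omega> c] unfolding c_def by linarith
    have "{\<omega>\<in>space M. s < frechet_cdf (region_max Z w \<omega>) powr \<gamma>} = space M - A"
      unfolding A_def using eqv by blast
    then have "measure M {\<omega>\<in>space M. s < frechet_cdf (region_max Z w \<omega>) powr \<gamma>} = 1 - measure M A"
      by (simp add: prob_compl)
    also have "measure M A = exp (- e / c)" using G[OF cpos] unfolding A_def joint_cdf_def by simp
    also have "- e / c = p * ln s"
    proof -
      have "- e / c = - e * (- ln s) / \<gamma>" unfolding c_def by (simp only: divide_divide_eq_right)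
      also have "\<dots> = (e / \<gamma>) * ln s" by simp
      finally show ?thesis unfolding p_def .
    qed
    also have "exp (p * ln s) = s powr p" using s by (simp add: powr_def)
    finally show ?thesis .
  qed
  have "integral\<^sup>L M (\<lambda>\<omega>. frechet_cdf (region_max Z w \<omega>) powr \<gamma>) = e / (\<gamma> + e)"
  proof (rule layer_cake[OF P Vm _ h _ hI])
    fix \<omega> show "0 \<le> frechet_cdf (region_max Z w \<omega>) powr \<gamma> \<and> frechet_cdf (region_max Z w \<omega>) powr \<gamma> \<le> 1"
      by (rule V01[OF g])
  next
    fix s :: real assume "s \<in> {0..1}"
    then have "s powr p \<le> 1" using ppos by (intro powr_le1) auto
    then show "0 \<le> 1 - s powr p" by simp
  qed
  then show ?thesis unfolding e_def .
qed



lemma integrable_V: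
  assumes P: "prob_space M" and meas: "\<And>u. Z u \<in> borel_measurable M" and w: "finite w" and g: "\<gamma> > 0"
  shows "integrable M (\<lambda>\<omega>. frechet_cdf (region_max Z w \<omega>) powr \<gamma>)"
proof -
  interpret prob_space M by (rule P)
  have [measurable]: "\<And>u. Z u \<in> borel_measurable M" by (rule meas)
  show ?thesis
    by (rule integrable_const_bound[where B=1]) (use V01[OF g] w in auto)
qed

lemma max_pow: assumes "\<gamma> > 0"
  shows "frechet_cdf (max a b) powr \<gamma> = max (frechet_cdf a powr \<gamma>) (frechet_cdf b powr \<gamma>)"
proof (cases "a \<le> b")
  case True
  then have "frechet_cdf a powr \<gamma> \<le> frechet_cdf b powr \<gamma>"
    using assms frechet_mono[OF True] frechet_nn[of a] by (intro powr_mono2) auto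
  then show ?thesis using True by (simp add: max_def)
next
  case False
  then have "b \<le> a" by simp
  then have "frechet_cdf b powr \<gamma> \<le> frechet_cdf a powr \<gamma>"
    using assms frechet_mono frechet_nn[of b] by (intro powr_mono2) auto
  then show ?thesis using False by (simp add: max_def)
qed

lemma region_max_Un:
  assumes "finite x" "x \<noteq> {}" "finite y" "y \<noteq> {}"
  shows "region_max Z (x \<union> y) \<omega> = max (region_max Z x \<omega>) (region_max Z y \<omega>)"
  unfolding region_max_def image_Un using assms by (simp add: Max_Un)

lemma lin: "(I::real) = 2*c - a - b \<Longrightarrow> a = a' \<Longrightarrow> b = b' \<Longrightarrow> c = c' \<Longrightarrow> 1/2*I = c' - 1/2*(a'+b')"
  by (simp add: field_simps)

theorem proposition2p2:
  fixes M :: "'a measure" and Z :: "real^2 \<Rightarrow> 'a \<Rightarrow> real"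
    and x y :: "(real^2) set" and \<alpha> \<beta> :: real
  assumes "prob_space M"
    and "max_stable M Z"
    and "\<And>u z. z > 0 \<Longrightarrow> measure M {\<omega> \<in> space M. Z u \<omega> \<le> z} = frechet_cdf z"
    and "finite x" "x \<noteq> {}" "finite y" "y \<noteq> {}" "x \<inter> y = {}"
    and "\<alpha> > 0" "\<beta> > 0"
  shows "0 \<le> madogram_nu M Z \<alpha> \<beta> x y \<and> madogram_nu M Z \<alpha> \<beta> x y \<le> 1/2 \<and>
         madogram_nu M Z \<alpha> \<alpha> x y =
           extremal_coeff M Z (x \<union> y) / (\<alpha> + extremal_coeff M Z (x \<union> y))
           - 1/2 * (extremal_coeff M Z x / (\<alpha> + extremal_coeff M Z x)
                    + extremal_coeff M Z y / (\<alpha> + extremal_coeff M Z y))"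
proof -
  note P = assms(1) and ms = assms(2) and marg = assms(3)
  note fx = assms(4,5) and fy = assms(6,7) and ab = assms(9,10)
  interpret prob_space M by (rule P)
  have meas[measurable]: "\<And>u. Z u \<in> borel_measurable M" using ms by (simp add: max_stable_def)
  define A where "A = (\<lambda>\<omega>. frechet_cdf (region_max Z x \<omega>) powr \<alpha>)"
  define B where "B = (\<lambda>\<omega>. frechet_cdf (region_max Z y \<omega>) powr \<beta>)"
  define B' where "B' = (\<lambda>\<omega>. frechet_cdf (region_max Z y \<omega>) powr \<alpha>)"
  define C where "C = (\<lambda>\<omega>. frechet_cdf (region_max Z (x \<union> y) \<omega>) powr \<alpha>)"
  have fxy: "finite (x \<union> y)" "x \<union> y \<noteq> {}" using fx fy by auto
  have iA: "integrable M A" unfolding A_def by (rule integrable_V[OF P meas fx(1) ab(1)])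
  have iB: "integrable M B" unfolding B_def by (rule integrable_V[OF P meas fy(1) ab(2)])
  have iB': "integrable M B'" unfolding B'_def by (rule integrable_V[OF P meas fy(1) ab(1)])
  have iC: "integrable M C" unfolding C_def by (rule integrable_V[OF P meas fxy(1) ab(1)])
  have nu: "madogram_nu M Z \<alpha> \<beta> x y = 1/2 * integral\<^sup>L M (\<lambda>\<omega>. \<bar>A \<omega> - B \<omega>\<bar>)"
    unfolding madogram_nu_def A_def B_def ..
  have part1a: "0 \<le> madogram_nu M Z \<alpha> \<beta> x y" unfolding nu by simp
  have "integral\<^sup>L M (\<lambda>\<omega>. \<bar>A \<omega> - B \<omega>\<bar>) \<le> integral\<^sup>L M (\<lambda>\<omega>. 1)"
  proof (rule integral_mono)
    show "integrable M (\<lambda>\<omega>. \<bar>A \<omega> - B \<omega>\<bar>)" using iA iB by auto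
    show "integrable M (\<lambda>\<omega>. 1::real)" by simp
    fix \<omega> show "\<bar>A \<omega> - B \<omega>\<bar> \<le> 1"
      using V01[OF ab(1), of "region_max Z x \<omega>"] V01[OF ab(2), of "region_max Z y \<omega>"]
      unfolding A_def B_def by linarith
  qed
  then have part1b: "madogram_nu M Z \<alpha> \<beta> x y \<le> 1/2" unfolding nu by (simp add: prob_space)
  have Cmax: "C \<omega> = max (A \<omega>) (B' \<omega>)" for \<omega>
    unfolding C_def A_def B'_def region_max_Un[OF fx fy] by (rule max_pow[OF ab(1)])
  have absC: "\<bar>A \<omega> - B' \<omega>\<bar> = 2 * C \<omega> - A \<omega> - B' \<omega>" for \<omega>
    using Cmax[of \<omega>] by (simp add: max_def abs_if)
  have nu2: "madogram_nu M Z \<alpha> \<alpha> x y = 1/2 * integral\<^sup>L M (\<lambda>\<omega>. 2 * C \<omega> - A \<omega> - B' \<omega>)"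
    unfolding madogram_nu_def using absC unfolding A_def B'_def by simp
  have "integral\<^sup>L M (\<lambda>\<omega>. 2 * C \<omega> - A \<omega> - B' \<omega>) = 2 * integral\<^sup>L M C - integral\<^sup>L M A - integral\<^sup>L M B'"
    using iA iB' iC by simp
  moreover have "integral\<^sup>L M A = extremal_coeff M Z x / (\<alpha> + extremal_coeff M Z x)"
    unfolding A_def by (rule EV[OF P ms marg fx ab(1)])
  moreover have "integral\<^sup>L M B' = extremal_coeff M Z y / (\<alpha> + extremal_coeff M Z y)"
    unfolding B'_def by (rule EV[OF P ms marg fy ab(1)])
  moreover have "integral\<^sup>L M C = extremal_coeff M Z (x \<union> y) / (\<alpha> + extremal_coeff M Z (x \<union> y))"
    unfolding C_def by (rule EV[OF P ms marg fxy ab(1)])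
  ultimately have part2: "madogram_nu M Z \<alpha> \<alpha> x y =
           extremal_coeff M Z (x \<union> y) / (\<alpha> + extremal_coeff M Z (x \<union> y))
           - 1/2 * (extremal_coeff M Z x / (\<alpha> + extremal_coeff M Z x)
                    + extremal_coeff M Z y / (\<alpha> + extremal_coeff M Z y))"
    unfolding nu2 by (rule lin)
  show ?thesis using part1a part1b part2 by blast
qed


end
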